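(* For every Dirichlet character $\chi$ modulo $d\ge1$ one has $|A_\chi|\le1$, with equality if and only if $\chi$ is the principal character modulo $d$ (in which case $A_\chi=1$).
   Context: For a Dirichlet character $\chi$, $A_\chi=\prod_{p:\ \chi(p)\neq0}\Bigl(1+\frac{(\chi(p)-1)p}{(p^2-\chi(p))(p-1)}\Bigr)$, the product running over primes $p$ (it converges absolutely). *)

theory Defs
  imports "HOL-Analysis.Analysis" "HOL-Computational_Algebra.Primes"
begin

definition dirichlet_character :: "nat \<Rightarrow> (nat \<Rightarrow> complex) \<Rightarrow> bool" where
  "dirichlet_character d chi \<longleftrightarrow>
     d \<ge> 1 \<and>
     (\<forall>m n. chi (m * n) = chi m * chi n) \<and>
     (\<forall>n. chi (n + d) = chi n) \<and>
     (\<forall>n. chi n \<noteq> 0 \<longleftrightarrow> coprime n d)"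

definition principal_character :: "nat \<Rightarrow> nat \<Rightarrow> complex" where
  "principal_character d n = (if coprime n d then 1 else 0)"

definition A_factor :: "(nat \<Rightarrow> complex) \<Rightarrow> nat \<Rightarrow> complex" where
  "A_factor chi p =
     (if prime p \<and> chi p \<noteq> 0 then
        1 + ((chi p - 1) * of_nat p) / ((of_nat p ^ 2 - chi p) * (of_nat p - 1))
      else 1)"

definition A_const :: "(nat \<Rightarrow> complex) \<Rightarrow> complex" where
  "A_const chi = (\<Prod>p. A_factor chi p)"

end

theory Submission imports Defs "HOL-Number_Theory.Number_Theory" begin

lemma factor_props:
  fixes c :: complex and p :: nat
  assumes p: "p \<ge> 2" and c: "norm c = 1"
  defines "f \<equiv> 1 + ((c - 1) * of_nat p) / ((of_nat p ^ 2 - c) * (of_nat p - 1))"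
  shows "norm f \<le> 1" "norm f = 1 \<Longrightarrow> c = 1" "norm (f - 1) \<le> 8 / real p ^ 2"
proof -
  define x where "x = real p"
  have x: "x \<ge> 2" using p by (simp add: x_def)
  have px: "(of_nat p :: complex) = of_real x" by (simp add: x_def)
  have d1: "norm (of_real x ^ 2 - c) \<ge> x^2 - 1"
    using norm_triangle_ineq2[of "of_real x ^ 2" c] c x by (simp add: norm_power)
  have x4: "x^2 \<ge> 4" using power_mono[OF x, of 2] by simp
  have x21: "x^2 - 1 \<ge> 3" using x4 by simp
  have nz1: "of_real x ^ 2 - c \<noteq> 0" using d1 x21 by auto
  have nz2: "(of_real x - 1 :: complex) \<noteq> 0"
  proof
    assume "(of_real x - 1 :: complex) = 0"
    hence "of_real x = (of_real 1 :: complex)" by simp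
    hence "x = 1" using of_real_eq_iff by blast
    thus False using x by simp
  qed
  obtain a b where cab: "c = Complex a b" by (cases c)
  have ab: "a^2 + b^2 = 1" using c by (simp add: cab cmod_def)
  define K where "K = x^3 - x^2"
  have K0: "K = x^2 * (x - 1)" unfolding K_def by (simp add: algebra_simps power2_eq_square power3_eq_cube)
  have "x^2 * (x - 1) \<ge> 4 * 1" using x4 x by (intro mult_mono) auto
  hence K: "K - 1 \<ge> 3" using K0 by simp
  define N where "N = (of_real x^3 - of_real x^2 - of_real x + c :: complex)"
  define D where "D = (of_real x^3 - of_real x^2 - c * of_real x + c :: complex)"
  have Deq: "D = (of_real x^2 - c) * (of_real x - 1)" unfolding D_def
    by (simp add: algebra_simps power2_eq_square power3_eq_cube)
  have Neq: "N = D + (c - 1) * of_real x" unfolding D_def N_def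
    by (simp add: algebra_simps)
  have Dnz: "D \<noteq> 0" using nz1 nz2 Deq by simp
  have feq: "f = N / D" unfolding f_def px Neq using Dnz Deq
    by (simp add: add_divide_distrib)
  have N2: "norm N ^ 2 = (K - x + a)^2 + b^2"
  proof -
    have "N = Complex (x^3 - x^2 - x + a) b" unfolding N_def cab by (simp add: complex_eq_iff)
    thus ?thesis by (simp add: cmod_power2 K_def)
  qed
  have D2: "norm D ^ 2 = (K - a*x + a)^2 + (b - b*x)^2"
  proof -
    have "D = Complex (x^3 - x^2 - a*x + a) (b - b*x)" unfolding D_def cab by (simp add: complex_eq_iff)
    thus ?thesis by (simp add: cmod_power2 K_def)
  qed
  have diff: "norm D ^ 2 - norm N ^ 2 = 2*x*(K-1)*(1-a)"
  proof -
    have b2: "b^2 = 1 - a^2" using ab by simp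
    have "(b - b*x)^2 = b^2 * (1 - x)^2" by (simp add: power2_eq_square algebra_simps)
    hence e: "(b - b*x)^2 = (1 - a^2) * (1 - x)^2" using b2 by simp
    show ?thesis unfolding N2 D2 e b2 by (simp add: power2_eq_square algebra_simps)
  qed
  have a1: "a \<le> 1"
  proof -
    have b0: "b^2 \<ge> 0" by simp
    have "a^2 \<le> 1^2" using ab b0 unfolding power2_eq_square by linarith
    thus ?thesis using abs_le_square_iff[of a 1] by simp
  qed
  have xpos: "x > 0" using x by simp
  have dge: "norm D ^ 2 - norm N ^ 2 \<ge> 0" unfolding diff using a1 K xpos by simp
  have ND2: "norm N ^ 2 \<le> norm D ^ 2" using dge by linarith
  have ND: "norm N \<le> norm D"
    using power2_le_imp_le[OF ND2 norm_ge_zero] .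
  have fnorm: "norm f = norm N / norm D" unfolding feq by (simp add: norm_divide)
  have Dpos: "norm D > 0" using Dnz by simp
  show "norm f \<le> 1" unfolding fnorm using ND Dpos by simp
  show "norm f = 1 \<Longrightarrow> c = 1"
  proof -
    assume "norm f = 1"
    hence "norm N = norm D" unfolding fnorm using Dpos by (simp add: divide_eq_1_iff)
    hence "2*x*(K-1)*(1-a) = 0" using diff by simp
    hence "a = 1" using xpos K by simp
    hence "b = 0" using ab by simp
    thus "c = 1" using \<open>a = 1\<close> cab by (simp add: one_complex.code)
  qed
  have "norm (f - 1) = norm ((c - 1) * of_real x) / norm D"
    unfolding feq Neq using Dnz by (simp add: add_divide_distrib norm_divide)
  also have "\<dots> \<le> (2 * x) / ((x^2 - 1) * (x - 1))"
  proof (rule frac_le)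
    have "norm (c - 1) \<le> 2" using norm_triangle_ineq4[of c 1] c by simp
    thus "norm ((c - 1) * of_real x) \<le> 2 * x" using xpos by (simp add: norm_mult)
    show "0 < (x^2 - 1) * (x - 1)" using x21 x by simp
    have "norm (of_real x - 1 :: complex) = x - 1"
    proof -
      have "(of_real x - 1 :: complex) = of_real (x - 1)" by simp
      thus ?thesis using x by (simp only: norm_of_real)
    qed
    thus "(x^2 - 1) * (x - 1) \<le> norm D" unfolding Deq norm_mult
      using d1 x21 x by (intro mult_mono) auto
  qed (use xpos in simp)
  also have "\<dots> \<le> 8 / x^2"
  proof -
    have "2 * x * x^2 \<le> 8 * ((x^2 - 1) * (x - 1))"
    proof -
      have "8 * ((x^2 - 1) * (x - 1)) - 2 * x * x^2 = 2 * x * (3*x^2 - 4*x - 4) + 8"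
        by (simp add: algebra_simps power2_eq_square power3_eq_cube)
      moreover have "3*x^2 - 4*x - 4 \<ge> 0"
      proof -
        have "3*x^2 - 4*x - 4 = (3*x + 2) * (x - 2)" by (simp add: algebra_simps power2_eq_square)
        thus ?thesis using x by simp
      qed
      hence "2 * x * (3*x^2 - 4*x - 4) \<ge> 0" using xpos by simp
      ultimately show ?thesis by linarith
    qed
    thus ?thesis using x21 x xpos by (simp add: divide_simps)
  qed
  finally show "norm (f - 1) \<le> 8 / real p ^ 2" by (simp add: x_def)
qed


lemma dc_mult: "dirichlet_character d chi \<Longrightarrow> chi (m * n) = chi m * chi n"
  by (simp add: dirichlet_character_def)

lemma dc_nz: "dirichlet_character d chi \<Longrightarrow> chi n \<noteq> 0 \<longleftrightarrow> coprime n d"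
  by (simp add: dirichlet_character_def)

lemma dc_one: assumes "dirichlet_character d chi" shows "chi 1 = 1"
proof -
  have "chi 1 = chi 1 * chi 1" using dc_mult[OF assms, of 1 1] by simp
  moreover have "chi 1 \<noteq> 0" using dc_nz[OF assms, of 1] by simp
  ultimately show ?thesis by (metis mult_cancel_left1)
qed

lemma dc_mod: assumes "dirichlet_character d chi" shows "chi n = chi (n mod d)"
proof -
  have per: "chi (m + d) = chi m" for m using assms by (simp add: dirichlet_character_def)
  have "chi (m + k * d) = chi m" for m k
  proof (induction k)
    case (Suc k)
    have "m + Suc k * d = (m + k * d) + d" by simp
    thus ?case using per[of "m + k * d"] Suc by metis
  qed simp
  from this[of "n mod d" "n div d"] show ?thesis by simp
qed

lemma dc_pow: assumes "dirichlet_character d chi" shows "chi (n ^ k) = chi n ^ k"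
proof (induction k)
  case 0 show ?case using dc_one[OF assms] by (metis power_0)
next
  case (Suc k) thus ?case by (simp add: dc_mult[OF assms])
qed

lemma dc_norm: assumes "dirichlet_character d chi" "coprime n d" shows "norm (chi n) = 1"
proof -
  define t where "t = totient d"
  have d1: "d \<ge> 1" using assms(1) by (simp add: dirichlet_character_def)
  have t: "t > 0" using d1 by (simp add: t_def)
  have "[n ^ t = 1] (mod d)" unfolding t_def by (rule euler_theorem[OF assms(2)])
  hence "n ^ t mod d = 1 mod d" by (simp add: cong_def)
  hence "chi (n ^ t) = chi 1" using dc_mod[OF assms(1), of "n^t"] dc_mod[OF assms(1), of 1] by simp
  hence "chi n ^ t = 1" using dc_pow[OF assms(1)] dc_one[OF assms(1)] by simp
  hence "norm (chi n) ^ t = 1 ^ t" by (metis norm_one norm_power power_one)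
  thus ?thesis using power_eq_iff_eq_base[OF t, of "norm (chi n)" 1] by simp
qed

lemma dc_nonprincipal:
  assumes "dirichlet_character d chi" "chi \<noteq> principal_character d"
  shows "\<exists>p. prime p \<and> chi p \<noteq> 0 \<and> chi p \<noteq> 1"
proof (rule ccontr)
  assume H: "\<not> ?thesis"
  have "chi n = principal_character d n" for n
  proof (cases "coprime n d")
    case False
    thus ?thesis using dc_nz[OF assms(1), of n] by (simp add: principal_character_def)
  next
    case True
    have "chi n = 1" using True
    proof (induction n rule: less_induct)
      case (less n)
      show ?case
      proof (cases "n = 0")
        case True
        hence "d = 1" using less.prems by simp
        hence "chi n = chi 1" using dc_mod[OF assms(1), of n] dc_mod[OF assms(1), of 1] by simp
        thus ?thesis using dc_one[OF assms(1)] by simp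
      next
        case n0: False
        show ?thesis
        proof (cases "n = 1")
          case True thus ?thesis using dc_one[OF assms(1)] by simp
        next
          case False
          then obtain p where p: "prime p" "p dvd n" using prime_factor_nat by blast
          then obtain m where m: "n = p * m" by blast
          have "m < n" 
          proof -
            have "m > 0" using m n0 by simp
            moreover have "p > 1" using p(1) prime_gt_1_nat by blast
            ultimately show ?thesis using m by simp
          qed
          have cm: "coprime m d" using less.prems m by simp
          have cp: "coprime p d" using less.prems m by simp
          have "chi p = 1" using H p(1) dc_nz[OF assms(1), of p] cp by blast
          moreover have "chi m = 1" using less.IH[OF \<open>m < n\<close> cm] .
          ultimately show ?thesis using m dc_mult[OF assms(1)] by simp
        qed
      qed
    qed
    thus ?thesis using True by (simp add: principal_character_def)
  qed
  thus False using assms(2) by blast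
qed


lemma A_factor_props:
  assumes "dirichlet_character d chi"
  shows "norm (A_factor chi p) \<le> 1" "norm (A_factor chi p - 1) \<le> 8 / real p ^ 2"
    "prime p \<Longrightarrow> chi p \<noteq> 0 \<Longrightarrow> chi p \<noteq> 1 \<Longrightarrow> norm (A_factor chi p) < 1"
proof -
  have main: "norm (A_factor chi p) \<le> 1 \<and> norm (A_factor chi p - 1) \<le> 8 / real p ^ 2 \<and>
     (norm (A_factor chi p) = 1 \<longrightarrow> chi p = 1)" if "prime p" "chi p \<noteq> 0"
  proof -
    have p2: "p \<ge> 2" using that(1) prime_ge_2_nat by blast
    have c: "norm (chi p) = 1" using dc_norm[OF assms] dc_nz[OF assms] that(2) by blast
    have e: "A_factor chi p = 1 + ((chi p - 1) * of_nat p) / ((of_nat p ^ 2 - chi p) * (of_nat p - 1))"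
      using that by (simp add: A_factor_def)
    show ?thesis unfolding e using factor_props[OF p2 c] by blast
  qed
  have triv: "A_factor chi p = 1" if "\<not> (prime p \<and> chi p \<noteq> 0)" unfolding A_factor_def by (rule if_not_P[OF that])
  show "norm (A_factor chi p) \<le> 1" using main triv by (cases "prime p \<and> chi p \<noteq> 0") auto
  show "norm (A_factor chi p - 1) \<le> 8 / real p ^ 2"
  proof (cases "prime p \<and> chi p \<noteq> 0")
    case True thus ?thesis using main by blast
  next
    case False thus ?thesis using triv[OF False] by simp
  qed
  show "prime p \<Longrightarrow> chi p \<noteq> 0 \<Longrightarrow> chi p \<noteq> 1 \<Longrightarrow> norm (A_factor chi p) < 1"
    using main by (meson order_le_less)
qed

theorem mainTheorem14:
  fixes d :: nat and chi :: "nat \<Rightarrow> complex"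
  assumes "d \<ge> 1" and "dirichlet_character d chi"
  shows "norm (A_const chi) \<le> 1
         \<and> (norm (A_const chi) = 1 \<longleftrightarrow> chi = principal_character d)
         \<and> (chi = principal_character d \<longrightarrow> A_const chi = 1)"
proof -
  note dc = assms(2)
  define F where "F = A_factor chi"
  have sg: "summable (\<lambda>n. 8 * inverse (real n ^ 2))"
    by (intro summable_mult inverse_power_summable) simp
  have "summable (\<lambda>p. norm (F p - 1))"
  proof (rule summable_comparison_test[OF _ sg])
    show "\<exists>N. \<forall>n\<ge>N. norm (norm (F n - 1)) \<le> 8 * inverse (real n ^ 2)"
      using A_factor_props(2)[OF dc] by (simp add: F_def field_simps)
  qed
  hence "convergent_prod F"
    by (intro abs_convergent_prod_imp_convergent_prod summable_imp_abs_convergent_prod)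
  hence lim: "(\<lambda>n. norm (\<Prod>i\<le>n. F i)) \<longlonglongrightarrow> norm (A_const chi)"
    unfolding A_const_def F_def by (intro tendsto_norm convergent_prod_LIMSEQ) (simp add: F_def)
  have pn: "norm (\<Prod>i\<le>n. F i) = (\<Prod>i\<le>n. norm (F i))" for n by (simp add: prod_norm)
  have le1: "norm (A_const chi) \<le> 1"
  proof (rule LIMSEQ_le_const2[OF lim])
    show "\<exists>N. \<forall>n\<ge>N. norm (\<Prod>i\<le>n. F i) \<le> 1"
      unfolding pn using A_factor_props(1)[OF dc] by (auto simp: F_def intro!: prod_le_1)
  qed
  have princ: "A_const chi = 1" if "chi = principal_character d"
  proof -
    have "A_factor chi p = 1" for p using that by (simp add: A_factor_def principal_character_def)
    hence "A_factor chi = (\<lambda>_. 1)" by auto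
    thus ?thesis by (simp add: A_const_def)
  qed
  have nonp: "norm (A_const chi) < 1" if np: "chi \<noteq> principal_character d"
  proof -
    obtain p where p: "prime p" "chi p \<noteq> 0" "chi p \<noteq> 1" using dc_nonprincipal[OF dc np] by blast
    have Fp: "norm (F p) < 1" using A_factor_props(3)[OF dc p] by (simp add: F_def)
    have "norm (A_const chi) \<le> norm (F p)"
    proof (rule LIMSEQ_le_const2[OF lim], intro exI allI impI)
      fix n assume n: "n \<ge> p"
      have "(\<Prod>i\<le>n. norm (F i)) = norm (F p) * (\<Prod>i\<in>{..n} - {p}. norm (F i))"
        using n by (intro prod.remove) auto
      also have "\<dots> \<le> norm (F p) * 1"
        using A_factor_props(1)[OF dc] by (intro mult_left_mono prod_le_1) (auto simp: F_def)
      finally show "norm (\<Prod>i\<le>n. F i) \<le> norm (F p)" unfolding pn by simp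
    qed
    thus ?thesis using Fp by simp
  qed
  show ?thesis using le1 princ nonp by force
qed

end
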